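(* Let $T\ge 1$ be an integer and $M>0$. For integers $A\le B$, $[A,B]$ denotes the discrete interval $\{A,A+1,\dots,B\}$, and $C([A,B],\mathbb{R})$ the set of real functions on $[A,B]$ with norm $\|u\|_C=\max_{k\in[A,B]}|u(k)|$. Let $L_M=\{u\in C([1,T],\mathbb{R}):\|u\|_C\le M\}$. $\Delta$ is the forward difference, $\Delta x(k)=x(k+1)-x(k)$. $E$ is the space of functions $y:[0,T+1]\to\mathbb{R}$ with $y(0)=y(T+1)=0$, normed by $\|y\|=\big(\sum_{k=1}^{T}(\Delta y(k))^2\big)^{1/2}$. For $u\in L_M$ consider the boundary value problem $$\Delta\big(p(k)\Delta x(k-1)\big)+f\big(k,x(k),u(k)\big)=g(k),\quad k\in[1,T],\qquad x(0)=x(T+1)=0. \tag{P$_u$}$$ Let $F(k,y,u)=\int_0^{y}f(k,t,u)\,dt$ and define $J_u:E\to\mathbb{R}$ by $$J_u(y)=\sum_{k=1}^{T+1}\frac{p(k)}{2}\big(\Delta y(k-1)\big)^2-\sum_{k=1}^{T}F\big(k,y(k),u(k)\big)+\sum_{k=1}^{T}g(k)y(k),$$ and $V_u=\{x\in E: J_u(x)=\inf_{v\in E}J_u(v)\text{ and }\tfrac{d}{dx}J_u(x)=0\}$. A positive solution of (P$_u$) is an $x\in E$ satisfying (P$_u$) with $x(k)>0$ for all $k\in[1,T]$. Consider the assumptions: (A1) $f(k,\cdot,\cdot)$ is continuous on $\mathbb{R}\times[-M,M]$ for each $k\in[1,T]$; $p\in C([1,T+1],\mathbb{R})$; $g\in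 C([1,T],\mathbb{R})$. (A2) There is $\alpha>0$ with $y\,f(k,y,u)\le 0$ for all $|y|\ge\alpha$, $|u|\le M$, $k\in[1,T]$. (A3) $m=\min_{k\in[1,T+1]}p(k)>0$. (A5) $f(k,y,u)-g(k)\ge 0$ for all $k\in[1,T]$, $y\in\mathbb{R}$, $|u|\le M$; and there is $k_1\in[1,T]$ with $f(k_1,y,u)-g(k_1)>0$ for all $y\in\mathbb{R}$, $|u|\le M$. (A6) $\lim_{y\to\infty}\sum_{k=1}^{T}F(k,y,u)=-\infty$ and $\lim_{y\to-\infty}\sum_{k=1}^{T}F(k,y,u)=c\in\mathbb{R}$, uniformly in $|u|\le M$. Assume either (A1), (A2), (A3), (A5) or (A1), (A3), (A5), (A6). Then for any fixed $u\in L_M$ there exists at least one solution $x\in V_u$ of (P$_u$) with $x(k)>0$ for $k\in[1,T]$ and $J_u(x)=\inf_{y\in E}J_u(y)$. Moreover, let $\{u_n\}\subset L_M$ converge to $\bar u\in L_M$. For any sequence $\{x_n\}$ of positive solutions $x_n\in V_{u_n}$ of (P$_{u_n}$), there exist a subsequence $\{x_{n_i}\}\subset E$ and $\bar x\in E$ such that $x_{n_i}\to\bar x$, $J_{\bar u}(\bar x)=\inf_{y\in E}J_{\bar u}(y)$, $\bar x(k)>0$ for $k\in[1,T]$, and $\bar x$ satisfies (P$_{\bar u}$).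
   Context: Discrete second-order Dirichlet boundary value problem depending on a functional parameter $u\in L_M$, studied variationally via the coercive action functional $J_u$; $V_u$ is the set of minimizers (critical points) of $J_u$. *)

theory Defs
  imports "HOL-Analysis.Analysis"
begin

text \<open>Functions on discrete intervals are modelled as nat \<Rightarrow> real; only the
values on the relevant interval matter.\<close>

definition normC :: "nat \<Rightarrow> (nat \<Rightarrow> real) \<Rightarrow> real" where
  "normC T u = Max ((\<lambda>k. \<bar>u k\<bar>) ` {1..T})"

definition LM :: "nat \<Rightarrow> real \<Rightarrow> (nat \<Rightarrow> real) set" where
  "LM T M = {u. normC T u \<le> M}"

definition Espace :: "nat \<Rightarrow> (nat \<Rightarrow> real) set" where
  "Espace T = {y. y 0 = 0 \<and> y (T + 1) = 0}"

definition normE :: "nat \<Rightarrow> (nat \<Rightarrow> real) \<Rightarrow> real" where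
  "normE T y = sqrt (\<Sum>k=1..T. (y (k + 1) - y k)\<^sup>2)"

definition Fint :: "(nat \<Rightarrow> real \<Rightarrow> real \<Rightarrow> real) \<Rightarrow> nat \<Rightarrow> real \<Rightarrow> real \<Rightarrow> real" where
  "Fint f k y u = (if 0 \<le> y then integral {0..y} (\<lambda>t. f k t u)
                   else - integral {y..0} (\<lambda>t. f k t u))"

definition Jfun :: "nat \<Rightarrow> (nat \<Rightarrow> real) \<Rightarrow> (nat \<Rightarrow> real \<Rightarrow> real \<Rightarrow> real) \<Rightarrow> (nat \<Rightarrow> real)
                    \<Rightarrow> (nat \<Rightarrow> real) \<Rightarrow> (nat \<Rightarrow> real) \<Rightarrow> real" where
  "Jfun T p f g u y =
     (\<Sum>k=1..T+1. p k / 2 * (y k - y (k - 1))\<^sup>2)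
     - (\<Sum>k=1..T. Fint f k (y k) (u k))
     + (\<Sum>k=1..T. g k * y k)"

definition Vset :: "nat \<Rightarrow> (nat \<Rightarrow> real) \<Rightarrow> (nat \<Rightarrow> real \<Rightarrow> real \<Rightarrow> real) \<Rightarrow> (nat \<Rightarrow> real)
                    \<Rightarrow> (nat \<Rightarrow> real) \<Rightarrow> (nat \<Rightarrow> real) set" where
  "Vset T p f g u = {x \<in> Espace T.
      (\<forall>v \<in> Espace T. Jfun T p f g u x \<le> Jfun T p f g u v) \<and>
      (\<forall>h \<in> Espace T. ((\<lambda>t. Jfun T p f g u (\<lambda>k. x k + t * h k)) has_real_derivative 0) (at 0))}"

definition solvesP :: "nat \<Rightarrow> (nat \<Rightarrow> real) \<Rightarrow> (nat \<Rightarrow> real \<Rightarrow> real \<Rightarrow> real) \<Rightarrow> (nat \<Rightarrow> real)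
                    \<Rightarrow> (nat \<Rightarrow> real) \<Rightarrow> (nat \<Rightarrow> real) \<Rightarrow> bool" where
  "solvesP T p f g u x \<longleftrightarrow> x \<in> Espace T \<and>
     (\<forall>k \<in> {1..T}. p (k + 1) * (x (k + 1) - x k) - p k * (x k - x (k - 1))
                    + f k (x k) (u k) = g k)"

end

theory Submission imports Defs begin

lemma Fint_repr:
  fixes \<phi> :: "real \<Rightarrow> real"
  assumes c: "continuous_on UNIV \<phi>" and z: "-L \<le> z" and L: "0 \<le> L"
  shows "(if 0 \<le> z then integral {0..z} \<phi> else - integral {z..0} \<phi>)
         = integral {-L..z} \<phi> - integral {-L..0} \<phi>"
proof (cases "0 \<le> z")
  case True
  have "integral {-L..0} \<phi> + integral {0..z} \<phi> = integral {-L..z} \<phi>"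
    using True L by (intro Henstock_Kurzweil_Integration.integral_combine integrable_continuous_real continuous_on_subset[OF c]) auto
  then show ?thesis using True by simp
next
  case False
  have "integral {-L..z} \<phi> + integral {z..0} \<phi> = integral {-L..0} \<phi>"
    using False z by (intro Henstock_Kurzweil_Integration.integral_combine integrable_continuous_real continuous_on_subset[OF c]) auto
  then show ?thesis using False by simp
qed

lemma Fint_deriv_gen:
  fixes \<phi> :: "real \<Rightarrow> real"
  assumes c: "continuous_on UNIV \<phi>"
  shows "((\<lambda>z. if 0 \<le> z then integral {0..z} \<phi> else - integral {z..0} \<phi>) has_real_derivative \<phi> y) (at y)"
proof -
  define L where "L = \<bar>y\<bar> + 1"
  have L: "0 \<le> L" "-L < y" "y < L" unfolding L_def by auto
  have d: "((\<lambda>z. integral {-L..z} \<phi>) has_real_derivative \<phi> y) (at y within {-L..L})"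
    by (rule integral_has_real_derivative) (use L c in \<open>auto intro: continuous_on_subset\<close>)
  have "at y within {-L..L} = at y" using L by (intro at_within_Icc_at) auto
  with d have d2: "((\<lambda>z. integral {-L..z} \<phi> - integral {-L..0} \<phi>) has_real_derivative \<phi> y) (at y)"
    by (auto intro!: derivative_eq_intros)
  show ?thesis
    by (rule has_field_derivative_transform_within_open[OF d2, of "{-L<..}"])
       (use L Fint_repr[OF c, of L] in \<open>auto\<close>)
qed

definition Ig :: "(real \<Rightarrow> real) \<Rightarrow> real \<Rightarrow> real" where
  "Ig \<phi> z = (if 0 \<le> z then integral {0..z} \<phi> else - integral {z..0} \<phi>)"

lemma Fint_Ig: "Fint f k y u = Ig (\<lambda>t. f k t u) y"
  by (simp add: Fint_def Ig_def)

lemma Ig_deriv: "continuous_on UNIV \<phi> \<Longrightarrow> (Ig \<phi> has_real_derivative \<phi> y) (at y)"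
  unfolding Ig_def[abs_def] by (rule Fint_deriv_gen)

lemma Ig_0[simp]: "Ig \<phi> 0 = 0" by (simp add: Ig_def)

lemma lip_deriv:
  fixes F F' :: "real \<Rightarrow> real"
  assumes d: "\<And>t. (F has_real_derivative F' t) (at t)"
    and b: "\<And>t. min a b \<le> t \<Longrightarrow> t \<le> max a b \<Longrightarrow> \<bar>F' t\<bar> \<le> C"
  shows "\<bar>F b - F a\<bar> \<le> C * \<bar>b - a\<bar>"
proof -
  consider "a < b" | "a = b" | "b < a" by linarith
  then show ?thesis
  proof cases
    case 1
    then obtain z where z: "a < z" "z < b" "F b - F a = (b - a) * F' z" using MVT2[OF 1 d] by blast
    have "\<bar>F' z\<bar> \<le> C" using b z 1 by auto
    then show ?thesis using z 1 by (simp add: abs_mult mult.commute mult_right_mono)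
  next
    case 2 then show ?thesis using b[of a] by auto
  next
    case 3
    then obtain z where z: "b < z" "z < a" "F a - F b = (a - b) * F' z" using MVT2[OF 3 d] by blast
    have "\<bar>F' z\<bar> \<le> C" using b z 3 by auto
    then show ?thesis using z 3 by (simp add: abs_mult mult.commute mult_right_mono abs_minus_commute)
  qed
qed

lemma mono_deriv:
  fixes F F' :: "real \<Rightarrow> real"
  assumes d: "\<And>t. (F has_real_derivative F' t) (at t)"
    and b: "\<And>t. a \<le> t \<Longrightarrow> t \<le> b \<Longrightarrow> F' t \<ge> 0" and ab: "a \<le> b"
  shows "F a \<le> F b"
proof (cases "a = b")
  case False
  then have "a < b" using ab by simp
  then obtain z where z: "a < z" "z < b" "F b - F a = (b - a) * F' z" using MVT2[OF _ d] by blast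
  have "F' z \<ge> 0" using b z by auto
  then have "0 \<le> (b - a) * F' z" using \<open>a < b\<close> by simp
  then show ?thesis using z by linarith
qed simp

lemma cont_slice:
  assumes "continuous_on (UNIV \<times> {-M..M}) (\<lambda>(y, u). f y u)" "\<bar>u\<bar> \<le> (M::real)"
  shows "continuous_on UNIV (\<lambda>t. f t u :: real)"
proof -
  have "continuous_on UNIV (\<lambda>t. (t, u))" by (intro continuous_intros)
  moreover have "range (\<lambda>t. (t, u)) \<subseteq> UNIV \<times> {-M..M}" using assms(2) by auto
  ultimately show ?thesis using continuous_on_compose2[OF assms(1), of UNIV "\<lambda>t. (t, u)"] by simp
qed

lemma Ig_tendsto:
  fixes f :: "real \<Rightarrow> real \<Rightarrow> real"
  assumes cont: "continuous_on (UNIV \<times> {-M..M}) (\<lambda>(y, u). f y u)"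
    and yn: "yn \<longlonglongrightarrow> y" and un: "un \<longlonglongrightarrow> u" and ub: "\<And>n. \<bar>un n\<bar> \<le> M"
  shows "(\<lambda>n. Ig (\<lambda>t. f t (un n)) (yn n)) \<longlonglongrightarrow> Ig (\<lambda>t. f t u) y"
proof -
  have uM: "\<bar>u\<bar> \<le> M"
    using LIMSEQ_le_const2[OF tendsto_rabs[OF un]] ub by auto
  define L where "L = \<bar>y\<bar> + 1"
  have "compact ((\<lambda>(y, u). f y u) ` ({-L..L} \<times> {-M..M}))"
    by (rule compact_continuous_image[OF continuous_on_subset[OF cont]])
       (auto intro: compact_Times)
  then obtain C where C: "\<And>p. p \<in> {-L..L} \<times> {-M..M} \<Longrightarrow> \<bar>(\<lambda>(y, u). f y u) p\<bar> \<le> C"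
    by (meson bounded_real compact_imp_bounded image_eqI)
  have C': "\<bar>f t v\<bar> \<le> C" if "\<bar>t\<bar> \<le> L" "\<bar>v\<bar> \<le> M" for t v
    using C[of "(t, v)"] that by (auto simp: abs_le_iff)
  have ev: "eventually (\<lambda>n. dist (yn n) y < 1) sequentially"
    using yn by (rule tendstoD) simp
  have t1: "(\<lambda>n. Ig (\<lambda>t. f t (un n)) (yn n) - Ig (\<lambda>t. f t (un n)) y) \<longlonglongrightarrow> 0"
  proof (rule Lim_null_comparison)
    show "eventually (\<lambda>n. norm (Ig (\<lambda>t. f t (un n)) (yn n) - Ig (\<lambda>t. f t (un n)) y)
            \<le> C * \<bar>yn n - y\<bar>) sequentially"
      using ev
    proof eventually_elim
      case (elim n)
      have "\<bar>Ig (\<lambda>t. f t (un n)) (yn n) - Ig (\<lambda>t. f t (un n)) y\<bar> \<le> C * \<bar>yn n - y\<bar>"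
      proof (rule lip_deriv)
        show "(Ig (\<lambda>t. f t (un n)) has_real_derivative f t (un n)) (at t)" for t
          by (rule Ig_deriv[OF cont_slice[OF cont ub]])
        show "\<bar>f t (un n)\<bar> \<le> C" if "min y (yn n) \<le> t" "t \<le> max y (yn n)" for t
          using that elim ub[of n] by (intro C') (auto simp: L_def dist_real_def)
      qed
      then show ?case by simp
    qed
    show "(\<lambda>n. C * \<bar>yn n - y\<bar>) \<longlonglongrightarrow> 0"
      using tendsto_mult_right_zero[OF tendsto_rabs_zero[OF LIM_zero[OF yn]]] by simp
  qed
  have t2: "(\<lambda>n. Ig (\<lambda>t. f t (un n)) y) \<longlonglongrightarrow> Ig (\<lambda>t. f t u) y"
  proof -
    have cp: "continuous_on {-M..M} (\<lambda>v. integral (cbox a b) (\<lambda>t. f t v))" for a b :: real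
    proof (rule integral_continuous_on_param)
      have c1: "continuous_on ({-M..M} \<times> cbox a b) (\<lambda>x. (snd x, fst x))"
        by (intro continuous_intros)
      have c2: "(\<lambda>x. (snd x, fst x)) ` ({-M..M} \<times> cbox a b) \<subseteq> UNIV \<times> {-M..M}" by auto
      show "continuous_on ({-M..M} \<times> cbox a b) (\<lambda>(x, t). f t x)"
        using continuous_on_compose2[OF cont c1 c2]
        by (simp add: case_prod_unfold)
    qed
    have "continuous_on {-M..M} (\<lambda>v. Ig (\<lambda>t. f t v) y)"
      using cp[of 0 y] continuous_on_minus[OF cp[of y 0]] unfolding Ig_def by (cases "0 \<le> y") simp_all
    moreover have "un n \<in> {-M..M}" for n using ub[of n] by (auto simp: abs_le_iff)
    moreover have "u \<in> {-M..M}" using uM by (auto simp: abs_le_iff)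
    ultimately show ?thesis
      by (intro continuous_on_tendsto_compose[OF _ un] always_eventually) auto
  qed
  show ?thesis using tendsto_add[OF t1 t2] by simp
qed

definition Dd :: "nat \<Rightarrow> (nat \<Rightarrow> real) \<Rightarrow> (nat \<Rightarrow> real \<Rightarrow> real \<Rightarrow> real) \<Rightarrow> (nat \<Rightarrow> real)
                    \<Rightarrow> (nat \<Rightarrow> real) \<Rightarrow> (nat \<Rightarrow> real) \<Rightarrow> (nat \<Rightarrow> real) \<Rightarrow> real" where
  "Dd T p f g u x h =
     (\<Sum>k=1..T+1. p k * (x k - x (k - 1)) * (h k - h (k - 1)))
     - (\<Sum>k=1..T. f k (x k) (u k) * h k)
     + (\<Sum>k=1..T. g k * h k)"

lemma J_deriv:
  assumes hf: "\<forall>k\<in>{1..T}. continuous_on UNIV (\<lambda>t. f k t (u k))"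
  shows "((\<lambda>t. Jfun T p f g u (\<lambda>k. x k + t * h k)) has_real_derivative Dd T p f g u x h) (at 0)"
proof -
  have d1: "((\<lambda>t. p k / 2 * ((x k + t * h k) - (x (k - 1) + t * h (k - 1)))\<^sup>2) has_real_derivative
        p k * (x k - x (k - 1)) * (h k - h (k - 1))) (at 0)" for k
  proof -
    have e: "(\<lambda>t. p k / 2 * ((x k + t * h k) - (x (k - 1) + t * h (k - 1)))\<^sup>2)
       = (\<lambda>t. p k / 2 * ((x k - x (k - 1)) + t * (h k - h (k - 1)))\<^sup>2)"
      by (simp add: algebra_simps)
    have "((\<lambda>t. c / 2 * (A + t * B)\<^sup>2) has_real_derivative c * A * B) (at 0)" for c A B :: real
      by (auto intro!: derivative_eq_intros)
    then show ?thesis unfolding e .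
  qed
  have d2: "((\<lambda>t. Fint f k (x k + t * h k) (u k)) has_real_derivative f k (x k) (u k) * h k) (at 0)"
    if "k \<in> {1..T}" for k
  proof -
    have a: "(Ig (\<lambda>t. f k t (u k)) has_real_derivative f k (x k) (u k)) (at ((\<lambda>t. x k + t * h k) 0))"
      using Ig_deriv[of "\<lambda>t. f k t (u k)" "x k"] hf that by simp
    have b: "((\<lambda>t. x k + t * h k) has_real_derivative h k) (at 0)"
      by (auto intro!: derivative_eq_intros)
    from DERIV_chain2[OF a b]
    show ?thesis by (simp add: Fint_Ig)
  qed
  have d3: "((\<lambda>t. g k * (x k + t * h k)) has_real_derivative g k * h k) (at 0)" for k
    by (auto intro!: derivative_eq_intros)
  show ?thesis
    unfolding Jfun_def Dd_def
    by (intro DERIV_add DERIV_diff DERIV_sum d1 d2 d3) auto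
qed

lemma min_Dd0:
  assumes hf: "\<forall>k\<in>{1..T}. continuous_on UNIV (\<lambda>t. f k t (u k))"
    and x: "x \<in> Espace T" and mn: "\<forall>v\<in>Espace T. Jfun T p f g u x \<le> Jfun T p f g u v"
    and h: "h \<in> Espace T"
  shows "Dd T p f g u x h = 0"
proof (rule DERIV_local_min[OF J_deriv[where T=T and f=f and u=u, OF hf], of 1])
  show "\<forall>y. \<bar>0 - y\<bar> < 1 \<longrightarrow> Jfun T p f g u (\<lambda>k. x k + 0 * h k) \<le> Jfun T p f g u (\<lambda>k. x k + y * h k)"
  proof (intro allI impI)
    fix y :: real
    have "(\<lambda>k. x k + y * h k) \<in> Espace T" using x h by (simp add: Espace_def)
    then show "Jfun T p f g u (\<lambda>k. x k + 0 * h k) \<le> Jfun T p f g u (\<lambda>k. x k + y * h k)"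
      using mn by simp
  qed
qed simp

lemma min_Vset:
  assumes hf: "\<forall>k\<in>{1..T}. continuous_on UNIV (\<lambda>t. f k t (u k))"
    and x: "x \<in> Espace T" and mn: "\<forall>v\<in>Espace T. Jfun T p f g u x \<le> Jfun T p f g u v"
  shows "x \<in> Vset T p f g u"
proof -
  have "((\<lambda>t. Jfun T p f g u (\<lambda>k. x k + t * h k)) has_real_derivative 0) (at 0)"
    if "h \<in> Espace T" for h
    using J_deriv[where T=T and f=f and u=u and p=p and g=g and x=x and h=h, OF hf] min_Dd0[OF hf x mn that]
    by simp
  then show ?thesis unfolding Vset_def using x mn by blast
qed

lemma Dd_ek:
  assumes k: "k \<in> {1..T}"
  shows "Dd T p f g u x (\<lambda>j. if j = k then 1 else 0) =
     p k * (x k - x (k - 1)) - p (k + 1) * (x (k + 1) - x k) - f k (x k) (u k) + g k"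
proof -
  have e: "p j * (x j - x (j - 1)) * ((if j = k then 1 else 0) - (if j - 1 = k then 1 else 0))
      = (if j = k then p j * (x j - x (j - 1)) else 0) - (if j = k + 1 then p j * (x j - x (j - 1)) else 0)"
    if "j \<in> {1..T+1}" for j
    using that by auto
  have s1: "(\<Sum>j=1..T+1. p j * (x j - x (j - 1)) * ((if j = k then 1 else 0) - (if j - 1 = k then 1 else 0)))
      = p k * (x k - x (k - 1)) - p (k + 1) * (x (k + 1) - x k)"
  proof -
    have "(\<Sum>j=1..T+1. p j * (x j - x (j - 1)) * ((if j = k then 1 else 0) - (if j - 1 = k then 1 else 0)))
      = (\<Sum>j=1..T+1. (if j = k then p j * (x j - x (j - 1)) else 0) - (if j = k + 1 then p j * (x j - x (j - 1)) else 0))"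
      by (rule sum.cong[OF refl e])
    also have "\<dots> = p k * (x k - x (k - 1)) - p (k + 1) * (x (k + 1) - x k)"
      using k by (simp only: sum_subtractf sum.delta') simp
    finally show ?thesis .
  qed
  have s2: "(\<Sum>j=1..T. f j (x j) (u j) * (if j = k then 1 else 0)) = f k (x k) (u k)"
    using k by (simp add: if_distrib cong: if_cong)
  have s3: "(\<Sum>j=1..T. g j * (if j = k then 1 else 0)) = g k"
    using k by (simp add: if_distrib cong: if_cong)
  show ?thesis unfolding Dd_def using s1 s2 s3 by simp
qed

lemma min_solves:
  assumes hf: "\<forall>k\<in>{1..T}. continuous_on UNIV (\<lambda>t. f k t (u k))"
    and x: "x \<in> Espace T" and mn: "\<forall>v\<in>Espace T. Jfun T p f g u x \<le> Jfun T p f g u v"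
  shows "solvesP T p f g u x"
  unfolding solvesP_def
proof (intro conjI ballI x)
  fix k assume k: "k \<in> {1..T}"
  have "(\<lambda>j. if j = k then 1 else (0::real)) \<in> Espace T" using k by (auto simp: Espace_def)
  from min_Dd0[OF hf x mn this] Dd_ek[OF k]
  show "p (k + 1) * (x (k + 1) - x k) - p k * (x k - x (k - 1)) + f k (x k) (u k) = g k"
    by simp
qed

lemma pos_sol:
  assumes s: "solvesP T p f g u x"
    and pp: "\<forall>k\<in>{1..T+1}. p k > 0"
    and ge: "\<forall>k\<in>{1..T}. f k (x k) (u k) \<ge> g k"
    and k1: "k1 \<in> {1..T}" and gt: "f k1 (x k1) (u k1) > g k1"
  shows "\<forall>k\<in>{1..T}. x k > 0"
proof (rule ccontr)
  assume "\<not> (\<forall>k\<in>{1..T}. x k > 0)"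
  then obtain k0 where k0: "k0 \<in> {1..T}" "x k0 \<le> 0" by force
  have x0: "x 0 = 0" "x (T + 1) = 0" using s by (auto simp: solvesP_def Espace_def)
  have eq: "p (k + 1) * (x (k + 1) - x k) - p k * (x k - x (k - 1)) + f k (x k) (u k) = g k"
    if "k \<in> {1..T}" for k using s that by (auto simp: solvesP_def)
  define m where "m = Min (x ` {0..T+1})"
  have mle: "m \<le> x j" if "j \<le> T + 1" for j unfolding m_def using that by (intro Min_le) auto
  have "m \<in> x ` {0..T+1}" unfolding m_def by (intro Min_in) auto
  then obtain j where j: "j \<le> T + 1" "x j = m" by auto
  have step: "x (i - 1) = m \<and> x (i + 1) = m" if i: "i \<in> {1..T}" "x i = m" for i
  proof -
    have ppi: "p (i + 1) > 0" "p i > 0" using pp i by auto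
    then have a: "0 \<le> p (i + 1) * (x (i + 1) - m)" and b: "0 \<le> p i * (x (i - 1) - m)"
      using i mle[of "i+1"] mle[of "i-1"] by auto
    have gi: "f i (x i) (u i) \<ge> g i" using ge i by auto
    have "p (i + 1) * (x (i + 1) - x i) - p i * (x i - x (i - 1)) \<le> 0"
      using eq[OF i(1)] gi by linarith
    moreover have "p (i + 1) * (x (i + 1) - m) + p i * (x (i - 1) - m)
       = p (i + 1) * (x (i + 1) - x i) - p i * (x i - x (i - 1))"
      using i(2) by (simp add: algebra_simps)
    ultimately have "p (i + 1) * (x (i + 1) - m) + p i * (x (i - 1) - m) \<le> 0" by simp
    then have "p (i + 1) * (x (i + 1) - m) = 0" "p i * (x (i - 1) - m) = 0" using a b by linarith+
    then show ?thesis using ppi by auto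
  qed
  obtain i where i: "i \<in> {1..T}" "x i = m"
  proof (cases "j \<in> {1..T}")
    case True then show ?thesis using that j by blast
  next
    case False
    then have "j = 0 \<or> j = T + 1" using j by auto
    then have "m = 0" using j x0 by auto
    then show ?thesis using that[of k0] k0 mle[of k0] by auto
  qed
  have up: "i + n \<le> T + 1 \<longrightarrow> x (i + n) = m" for n
  proof (induction n)
    case 0 then show ?case using i by simp
  next
    case (Suc n)
    show ?case
    proof
      assume "i + Suc n \<le> T + 1"
      then have "i + n \<in> {1..T}" "x (i + n) = m" using Suc i by auto
      from step[OF this] show "x (i + Suc n) = m" by simp
    qed
  qed
  have down: "n \<le> i \<longrightarrow> x (i - n) = m" for n
  proof (induction n)
    case 0 then show ?case using i by simp
  next
    case (Suc n)
    show ?case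
    proof
      assume "Suc n \<le> i"
      then have this_tmp: "i - n \<in> {1..T}" "x (i - n) = m" using Suc i by auto
      have "i - n - 1 = i - Suc n" by simp
      with step[OF this_tmp] show "x (i - Suc n) = m" by metis
    qed
  qed
  have all: "x j' = m" if "j' \<le> T + 1" for j'
  proof (cases "i \<le> j'")
    case True then show ?thesis using up[of "j' - i"] that by simp
  next
    case False then show ?thesis using down[of "i - j'"] by simp
  qed
  have "x (k1 - 1) = m" "x k1 = m" "x (k1 + 1) = m" using all k1 by auto
  then have "f k1 (x k1) (u k1) = g k1"
    using eq[OF k1] by simp
  then show False using gt by simp
qed

lemma sq_step:
  fixes a d s k :: real
  assumes "a\<^sup>2 \<le> k * s" "k \<ge> 0" "s \<ge> 0"
  shows "(a + d)\<^sup>2 \<le> (k + 1) * (s + d\<^sup>2)"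
proof (cases "k = 0")
  case True
  then have "a = 0" using assms by simp
  then show ?thesis using True assms by simp
next
  case False
  then have kp: "k > 0" using assms by simp
  have "0 \<le> (a - k * d)\<^sup>2" by simp
  then have "k * (a + d)\<^sup>2 \<le> (k + 1) * (a\<^sup>2 + k * d\<^sup>2)"
    by (simp add: power2_eq_square algebra_simps)
  also have "\<dots> \<le> (k + 1) * (k * s + k * d\<^sup>2)"
    using assms by (intro mult_left_mono) auto
  also have "\<dots> = k * ((k + 1) * (s + d\<^sup>2))" by (simp add: algebra_simps)
  finally show ?thesis using kp by simp
qed

lemma sq_partial:
  fixes y :: "nat \<Rightarrow> real"
  assumes y0: "y 0 = 0"
  shows "(y k)\<^sup>2 \<le> real k * (\<Sum>j=1..k. (y j - y (j - 1))\<^sup>2)"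
proof (induction k)
  case 0 then show ?case using y0 by simp
next
  case (Suc k)
  have s: "(\<Sum>j=1..Suc k. (y j - y (j - 1))\<^sup>2) = (\<Sum>j=1..k. (y j - y (j - 1))\<^sup>2) + (y (Suc k) - y k)\<^sup>2"
    by simp
  have "(y k + (y (Suc k) - y k))\<^sup>2 \<le> (real k + 1) * ((\<Sum>j=1..k. (y j - y (j - 1))\<^sup>2) + (y (Suc k) - y k)\<^sup>2)"
    by (rule sq_step[OF Suc.IH]) (auto intro: sum_nonneg)
  then show ?case unfolding s by (simp add: add.commute)
qed

lemma young:
  fixes b y e :: real
  assumes "e > 0"
  shows "b * \<bar>y\<bar> \<le> e * y\<^sup>2 + b\<^sup>2 / (4 * e)"
proof -
  have "0 \<le> (2 * e * \<bar>y\<bar> - b)\<^sup>2" by simp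
  then have "4 * e * (b * \<bar>y\<bar>) \<le> 4 * e * (e * y\<^sup>2) + b\<^sup>2"
    by (simp add: power2_eq_square algebra_simps)
  also have "\<dots> = 4 * e * (e * y\<^sup>2 + b\<^sup>2 / (4 * e))" using assms by (simp add: field_simps)
  finally show ?thesis using assms by simp
qed

lemma J_bound:
  fixes T :: nat and m a b :: real
  assumes T: "T \<ge> 1" and m: "m > 0" and pm: "\<forall>k\<in>{1..T+1}. m \<le> p k"
    and ab: "a \<ge> 0" "b \<ge> 0"
    and H: "\<forall>k\<in>{1..T}. Fint f k (y k) (u k) - g k * y k \<le> a + b * \<bar>y k\<bar>"
    and y: "y \<in> Espace T" and J: "Jfun T p f g u y \<le> 0"
  shows "\<forall>k\<in>{1..T}. \<bar>y k\<bar> \<le> 1 + (T + 1) * (4 * (T * a + T * b\<^sup>2 / (4 * (m / (4 * real T * (real T + 1))))) / m)"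
proof -
  define e where "e = m / (4 * real T * (real T + 1))"
  define K where "K = T * a + T * b\<^sup>2 / (4 * e)"
  define S where "S = (\<Sum>j=1..T+1. (y j - y (j - 1))\<^sup>2)"
  have "real T > 0" using T by simp
  then have den: "4 * real T * (real T + 1) > 0" by (intro mult_pos_pos) auto
  then have e: "e > 0" using m unfolding e_def by (intro divide_pos_pos)
  have S0: "S \<ge> 0" unfolding S_def by (intro sum_nonneg) auto
  have y0: "y 0 = 0" using y by (simp add: Espace_def)
  have ysq: "(y k)\<^sup>2 \<le> (T + 1) * S" if "k \<le> T + 1" for k
  proof -
    have "(\<Sum>j=1..k. (y j - y (j - 1))\<^sup>2) \<le> S"
      unfolding S_def using that by (intro sum_mono2) auto
    moreover have "(\<Sum>j=1..k. (y j - y (j - 1))\<^sup>2) \<ge> 0" by (intro sum_nonneg) auto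
    ultimately have "real k * (\<Sum>j=1..k. (y j - y (j - 1))\<^sup>2) \<le> (T + 1) * S"
      using that S0 by (intro mult_mono) auto
    then show ?thesis using sq_partial[where y=y and k=k, OF y0] by linarith
  qed
  have q: "m / 2 * S \<le> (\<Sum>k=1..T+1. p k / 2 * (y k - y (k - 1))\<^sup>2)"
    unfolding S_def sum_distrib_left using pm
    by (intro sum_mono) (auto intro!: mult_right_mono)
  have lin: "(\<Sum>k=1..T. Fint f k (y k) (u k)) - (\<Sum>k=1..T. g k * y k)
      \<le> (\<Sum>k=1..T. a + (e * ((T + 1) * S) + b\<^sup>2 / (4 * e)))"
    unfolding sum_subtractf[symmetric]
  proof (intro sum_mono)
    fix k assume k: "k \<in> {1..T}"
    have "b * \<bar>y k\<bar> \<le> e * (y k)\<^sup>2 + b\<^sup>2 / (4 * e)" by (rule young[OF e])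
    also have "\<dots> \<le> e * ((T + 1) * S) + b\<^sup>2 / (4 * e)"
      using ysq[of k] k e by (intro add_right_mono mult_left_mono) auto
    finally show "Fint f k (y k) (u k) - g k * y k \<le> a + (e * ((T + 1) * S) + b\<^sup>2 / (4 * e))"
      using H k by fastforce
  qed
  have "(\<Sum>k=1..T. a + (e * ((T + 1) * S) + b\<^sup>2 / (4 * e))) = T * a + T * e * (T + 1) * S + T * b\<^sup>2 / (4 * e)"
    by (simp add: algebra_simps)
  also have "T * e * (T + 1) * S = m / 4 * S"
  proof -
    have ee: "e * (4 * real T * (real T + 1)) = m" using den T unfolding e_def by simp
    show ?thesis by (subst ee[symmetric]) (simp add: algebra_simps)
  qed
  finally have "m / 2 * S - (T * a + m / 4 * S + T * b\<^sup>2 / (4 * e)) \<le> Jfun T p f g u y"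
    using q lin unfolding Jfun_def by linarith
  then have "m / 4 * S \<le> K" using J unfolding K_def by linarith
  then have SK: "S \<le> 4 * K / m" using m by (simp add: field_simps)
  show ?thesis
  proof
    fix k assume k: "k \<in> {1..T}"
    have "0 \<le> (\<bar>y k\<bar> - 1)\<^sup>2" by simp
    then have "2 * \<bar>y k\<bar> \<le> (y k)\<^sup>2 + 1" by (simp add: power2_diff)
    moreover have "0 \<le> (y k)\<^sup>2" by simp
    ultimately have "\<bar>y k\<bar> \<le> 1 + (y k)\<^sup>2" by linarith
    also have "\<dots> \<le> 1 + (T + 1) * S" using ysq[of k] k by simp
    also have "\<dots> \<le> 1 + (T + 1) * (4 * K / m)" using SK by (intro add_left_mono mult_left_mono) auto
    finally show "\<bar>y k\<bar> \<le> 1 + (T + 1) * (4 * (T * a + T * b\<^sup>2 / (4 * (m / (4 * real T * (real T + 1))))) / m)"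
      unfolding K_def e_def by simp
  qed
qed

lemma bound_compact:
  fixes f :: "real \<Rightarrow> real \<Rightarrow> real"
  assumes cont: "continuous_on (UNIV \<times> {-M..M}) (\<lambda>(y, u). f y u)"
  shows "\<exists>C\<ge>0. \<forall>t v. \<bar>t\<bar> \<le> L \<and> \<bar>v\<bar> \<le> M \<longrightarrow> \<bar>f t v\<bar> \<le> C"
proof -
  have "compact ((\<lambda>(y, u). f y u) ` ({-L..L} \<times> {-M..M}))"
    by (rule compact_continuous_image[OF continuous_on_subset[OF cont]])
       (auto intro: compact_Times)
  then obtain C where C: "\<And>p. p \<in> {-L..L} \<times> {-M..M} \<Longrightarrow> \<bar>(\<lambda>(y, u). f y u) p\<bar> \<le> C"
    by (meson bounded_real compact_imp_bounded image_eqI)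
  have "\<bar>f t v\<bar> \<le> \<bar>C\<bar>" if "\<bar>t\<bar> \<le> L" "\<bar>v\<bar> \<le> M" for t v
    using C[of "(t, v)"] that by (auto simp: abs_le_iff)
  then show ?thesis by (intro exI[of _ "\<bar>C\<bar>"]) auto
qed

lemma H_deriv:
  fixes f :: "real \<Rightarrow> real \<Rightarrow> real"
  assumes cont: "continuous_on (UNIV \<times> {-M..M}) (\<lambda>(y, u). f y u)" and u: "\<bar>u\<bar> \<le> M"
  shows "((\<lambda>y. Ig (\<lambda>t. f t u) y - c * y) has_real_derivative f t u - c) (at t)"
  using Ig_deriv[OF cont_slice[OF cont u], of t]
  by (auto intro!: derivative_eq_intros)

lemma H_mono:
  fixes f :: "real \<Rightarrow> real \<Rightarrow> real"
  assumes cont: "continuous_on (UNIV \<times> {-M..M}) (\<lambda>(y, u). f y u)" and u: "\<bar>u\<bar> \<le> M"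
    and A5: "\<forall>y u. \<bar>u\<bar> \<le> M \<longrightarrow> f y u - c \<ge> 0" and le: "y1 \<le> y2"
  shows "Ig (\<lambda>t. f t u) y1 - c * y1 \<le> Ig (\<lambda>t. f t u) y2 - c * y2"
proof -
  have "(\<lambda>y. Ig (\<lambda>t. f t u) y - c * y) y1 \<le> (\<lambda>y. Ig (\<lambda>t. f t u) y - c * y) y2"
  proof (rule mono_deriv[OF _ _ le])
    show "((\<lambda>y. Ig (\<lambda>t. f t u) y - c * y) has_real_derivative f t u - c) (at t)" for t
      by (rule H_deriv[OF cont u])
    show "0 \<le> f t u - c" for t using A5 u by auto
  qed
  then show ?thesis by simp
qed

lemma per_k_A2:
  fixes f :: "real \<Rightarrow> real \<Rightarrow> real"
  assumes cont: "continuous_on (UNIV \<times> {-M..M}) (\<lambda>(y, u). f y u)"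
    and A5: "\<forall>y u. \<bar>u\<bar> \<le> M \<longrightarrow> f y u - c \<ge> 0"
    and al: "\<alpha> > 0" and A2: "\<forall>y u. \<bar>y\<bar> \<ge> \<alpha> \<and> \<bar>u\<bar> \<le> M \<longrightarrow> y * f y u \<le> 0"
  shows "\<exists>a b. \<forall>y u. \<bar>u\<bar> \<le> M \<longrightarrow> Ig (\<lambda>t. f t u) y - c * y \<le> a + b * \<bar>y\<bar>"
proof -
  obtain C where C0: "C \<ge> 0" and C: "\<And>t v. \<bar>t\<bar> \<le> \<alpha> \<Longrightarrow> \<bar>v\<bar> \<le> M \<Longrightarrow> \<bar>f t v\<bar> \<le> C"
    using bound_compact[OF cont, of \<alpha>] by blast
  define H where "H u y = Ig (\<lambda>t. f t u) y - c * y" for u y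
  have H0: "H u 0 = 0" for u by (simp add: H_def)
  have Hm: "H u y1 \<le> H u y2" if "\<bar>u\<bar> \<le> M" "y1 \<le> y2" for u y1 y2
    unfolding H_def by (rule H_mono[OF cont that(1) A5 that(2)])
  have "H u y \<le> (C + \<bar>c\<bar>) * \<alpha> + \<bar>c\<bar> * \<bar>y\<bar>" if u: "\<bar>u\<bar> \<le> M" for u y
  proof -
    have Ha: "H u \<alpha> \<le> (C + \<bar>c\<bar>) * \<alpha>"
    proof -
      have "\<bar>H u \<alpha> - H u 0\<bar> \<le> (C + \<bar>c\<bar>) * \<bar>\<alpha> - 0\<bar>"
      proof (rule lip_deriv)
        show "(H u has_real_derivative f t u - c) (at t)" for t
          unfolding H_def[abs_def] by (rule H_deriv[OF cont u])
        show "\<bar>f t u - c\<bar> \<le> C + \<bar>c\<bar>" if "min 0 \<alpha> \<le> t" "t \<le> max 0 \<alpha>" for t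
          using C[of t u] that u al by (auto simp: abs_le_iff)
      qed
      then show ?thesis using al H0 by auto
    qed
    consider "y \<le> 0" | "0 \<le> y" "y \<le> \<alpha>" | "\<alpha> < y" by linarith
    then show ?thesis
    proof cases
      case 1
      then have "H u y \<le> 0" using Hm[OF u 1] H0 by simp
      then show ?thesis using C0 al by (smt (verit) mult_nonneg_nonneg abs_ge_zero)
    next
      case 2
      then have "H u y \<le> H u \<alpha>" using Hm[OF u] by simp
      then show ?thesis using Ha by (smt (verit) mult_nonneg_nonneg abs_ge_zero)
    next
      case 3
      have "(\<lambda>t. \<bar>c\<bar> * t - H u t) \<alpha> \<le> (\<lambda>t. \<bar>c\<bar> * t - H u t) y"
      proof (rule mono_deriv[where F="\<lambda>t. \<bar>c\<bar> * t - H u t" and F'="\<lambda>t. \<bar>c\<bar> - (f t u - c)"])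
        show "((\<lambda>t. \<bar>c\<bar> * t - H u t) has_real_derivative \<bar>c\<bar> - (f t u - c)) (at t)" for t
          unfolding H_def by (auto intro!: derivative_eq_intros Ig_deriv[OF cont_slice[OF cont u]])
        show "0 \<le> \<bar>c\<bar> - (f t u - c)" if "\<alpha> \<le> t" "t \<le> y" for t
        proof -
          have "t * f t u \<le> 0" using A2 that u al by auto
          then have "f t u \<le> 0" using that al by (smt (verit) mult_pos_pos)
          then show ?thesis by linarith
        qed
      qed (use 3 in auto)
      then have "H u y \<le> H u \<alpha> + \<bar>c\<bar> * (y - \<alpha>)" by (simp add: algebra_simps)
      also have "\<dots> \<le> (C + \<bar>c\<bar>) * \<alpha> + \<bar>c\<bar> * \<bar>y\<bar>"
        using Ha 3 al by (intro add_mono mult_left_mono) auto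
      finally show ?thesis .
    qed
  qed
  then show ?thesis unfolding H_def by blast
qed

lemma combine_k:
  assumes "\<forall>k\<in>{1..T}. \<exists>a b. \<forall>y u. \<bar>u\<bar> \<le> M \<longrightarrow> Fint f k y u - g k * y \<le> a + b * \<bar>y\<bar>"
  shows "\<exists>a b. a \<ge> 0 \<and> b \<ge> 0 \<and> (\<forall>k\<in>{1..T}. \<forall>y u. \<bar>u\<bar> \<le> M \<longrightarrow> Fint f k y u - g k * y \<le> a + b * \<bar>y\<bar>)"
proof -
  from assms obtain A where "\<forall>k\<in>{1..T}. \<exists>b. \<forall>y u. \<bar>u\<bar> \<le> M \<longrightarrow> Fint f k y u - g k * y \<le> A k + b * \<bar>y\<bar>"
    by metis
  then obtain B where AB: "\<forall>k\<in>{1..T}. \<forall>y u. \<bar>u\<bar> \<le> M \<longrightarrow> Fint f k y u - g k * y \<le> A k + B k * \<bar>y\<bar>"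
    by metis
  define a where "a = (\<Sum>k\<in>{1..T}. \<bar>A k\<bar>)"
  define b where "b = (\<Sum>k\<in>{1..T}. \<bar>B k\<bar>)"
  have "Fint f k y u - g k * y \<le> a + b * \<bar>y\<bar>" if k: "k \<in> {1..T}" and u: "\<bar>u\<bar> \<le> M" for k y u
  proof -
    have "\<bar>A k\<bar> \<le> a" unfolding a_def using k by (intro member_le_sum) auto
    moreover have "\<bar>B k\<bar> \<le> b" unfolding b_def using k by (intro member_le_sum) auto
    then have "B k * \<bar>y\<bar> \<le> b * \<bar>y\<bar>" by (intro mult_right_mono) auto
    moreover have "Fint f k y u - g k * y \<le> A k + B k * \<bar>y\<bar>" using AB k u by blast
    ultimately show ?thesis by linarith
  qed
  moreover have "a \<ge> 0" "b \<ge> 0" unfolding a_def b_def by (auto intro: sum_nonneg)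
  ultimately show ?thesis by blast
qed

lemma A6_case:
  assumes A1: "\<forall>k \<in> {1..T}. continuous_on (UNIV \<times> {-M..M}) (\<lambda>(y, u). f k y u)"
    and A5: "\<forall>k \<in> {1..T}. \<forall>y u. \<bar>u\<bar> \<le> M \<longrightarrow> f k y u - g k \<ge> 0"
    and hB: "\<exists>Y. \<forall>y \<ge> Y. \<forall>u. \<bar>u\<bar> \<le> M \<longrightarrow> (\<Sum>k=1..T. Fint f k y u) \<le> 0"
  shows "\<exists>a b. a \<ge> 0 \<and> b \<ge> 0 \<and> (\<forall>k\<in>{1..T}. \<forall>y u. \<bar>u\<bar> \<le> M \<longrightarrow> Fint f k y u - g k * y \<le> a + b * \<bar>y\<bar>)"
proof -
  obtain Y where Y: "\<And>y u. y \<ge> Y \<Longrightarrow> \<bar>u\<bar> \<le> M \<Longrightarrow> (\<Sum>k=1..T. Fint f k y u) \<le> 0"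
    using hB by blast
  define Y' where "Y' = max Y 0"
  define G where "G = (\<Sum>j\<in>{1..T}. \<bar>g j\<bar>)"
  have G0: "G \<ge> 0" unfolding G_def by (auto intro: sum_nonneg)
  define H where "H k y u = Fint f k y u - g k * y" for k y u
  have Hm: "H k y1 u \<le> H k y2 u" if "k \<in> {1..T}" "\<bar>u\<bar> \<le> M" "y1 \<le> y2" for k y1 y2 u
    unfolding H_def Fint_Ig
    by (rule H_mono[where f="f k"]) (use A1 A5 that in auto)
  have H0: "H k 0 u = 0" for k u by (simp add: H_def Fint_Ig)
  have Hbig: "H k y u \<le> G * y" if k: "k \<in> {1..T}" and u: "\<bar>u\<bar> \<le> M" and y: "y \<ge> Y'" for k y u
  proof -
    have y0: "y \<ge> 0" "y \<ge> Y" using y unfolding Y'_def by auto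
    have Fj: "Fint f j y u \<ge> g j * y" if "j \<in> {1..T}" for j
      using Hm[OF that u y0(1)] H0[of j u] unfolding H_def by simp
    have "(\<Sum>j=1..T. Fint f j y u) = Fint f k y u + (\<Sum>j\<in>{1..T}-{k}. Fint f j y u)"
      using k by (simp add: sum.remove)
    moreover have "(\<Sum>j\<in>{1..T}-{k}. g j * y) \<le> (\<Sum>j\<in>{1..T}-{k}. Fint f j y u)"
      using Fj by (intro sum_mono) auto
    moreover have "(\<Sum>j=1..T. g j * y) = g k * y + (\<Sum>j\<in>{1..T}-{k}. g j * y)"
      using k by (simp add: sum.remove)
    ultimately have "Fint f k y u - g k * y \<le> - (\<Sum>j=1..T. g j * y)"
      using Y[OF y0(2) u] by linarith
    also have "\<dots> = - (\<Sum>j=1..T. g j) * y" by (simp add: sum_distrib_right)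
    also have "\<dots> \<le> \<bar>\<Sum>j=1..T. g j\<bar> * y" using y0 by (intro mult_right_mono) auto
    also have "\<dots> \<le> G * y" unfolding G_def using y0 by (intro mult_right_mono sum_abs) auto
    finally show ?thesis unfolding H_def .
  qed
  have "H k y u \<le> G * Y' + G * \<bar>y\<bar>" if k: "k \<in> {1..T}" and u: "\<bar>u\<bar> \<le> M" for k y u
  proof -
    have Y'0: "Y' \<ge> 0" unfolding Y'_def by simp
    consider "y \<le> 0" | "0 \<le> y" "y \<le> Y'" | "Y' \<le> y" by linarith
    then show ?thesis
    proof cases
      case 1
      then have "H k y u \<le> 0" using Hm[OF k u 1] H0 by simp
      then show ?thesis using G0 Y'0 by (smt (verit) mult_nonneg_nonneg abs_ge_zero)
    next
      case 2
      then have "H k y u \<le> H k Y' u" using Hm[OF k u] by simp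
      also have "\<dots> \<le> G * Y'" using Hbig[OF k u] by simp
      finally show ?thesis using G0 by (smt (verit) mult_nonneg_nonneg abs_ge_zero)
    next
      case 3
      then show ?thesis using Hbig[OF k u 3] G0 Y'0 by (smt (verit) mult_nonneg_nonneg abs_ge_zero)
    qed
  qed
  moreover have "G * Y' \<ge> 0" using G0 unfolding Y'_def by simp
  ultimately show ?thesis using G0 unfolding H_def by blast
qed

lemma coerc:
  assumes A1: "\<forall>k \<in> {1..T}. continuous_on (UNIV \<times> {-M..M}) (\<lambda>(y, u). f k y u)"
    and A5: "\<forall>k \<in> {1..T}. \<forall>y u. \<bar>u\<bar> \<le> M \<longrightarrow> f k y u - g k \<ge> 0"
    and A2_or_A6:
      "(\<exists>\<alpha>>0. \<forall>k \<in> {1..T}. \<forall>y u. \<bar>y\<bar> \<ge> \<alpha> \<and> \<bar>u\<bar> \<le> M \<longrightarrow> y * f k y u \<le> 0)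
       \<or> ((\<forall>B. \<exists>Y. \<forall>y \<ge> Y. \<forall>u. \<bar>u\<bar> \<le> M \<longrightarrow> (\<Sum>k=1..T. Fint f k y u) \<le> B)
          \<and> (\<exists>c. \<forall>\<epsilon>>0. \<exists>Y. \<forall>y \<le> Y. \<forall>u. \<bar>u\<bar> \<le> M \<longrightarrow>
                 \<bar>(\<Sum>k=1..T. Fint f k y u) - c\<bar> < \<epsilon>))"
  shows "\<exists>a b. a \<ge> 0 \<and> b \<ge> 0 \<and> (\<forall>k\<in>{1..T}. \<forall>y u. \<bar>u\<bar> \<le> M \<longrightarrow> Fint f k y u - g k * y \<le> a + b * \<bar>y\<bar>)"
  using A2_or_A6
proof
  assume "\<exists>\<alpha>>0. \<forall>k \<in> {1..T}. \<forall>y u. \<bar>y\<bar> \<ge> \<alpha> \<and> \<bar>u\<bar> \<le> M \<longrightarrow> y * f k y u \<le> 0"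
  then obtain \<alpha> where al: "\<alpha> > 0" and A2: "\<forall>k \<in> {1..T}. \<forall>y u. \<bar>y\<bar> \<ge> \<alpha> \<and> \<bar>u\<bar> \<le> M \<longrightarrow> y * f k y u \<le> 0"
    by blast
  show ?thesis
  proof (rule combine_k, intro ballI)
    fix k assume k: "k \<in> {1..T}"
    show "\<exists>a b. \<forall>y u. \<bar>u\<bar> \<le> M \<longrightarrow> Fint f k y u - g k * y \<le> a + b * \<bar>y\<bar>"
      unfolding Fint_Ig
      by (rule per_k_A2[where f="f k" and \<alpha>=\<alpha>]) (use A1 A5 A2 al k in auto)
  qed
next
  assume "(\<forall>B. \<exists>Y. \<forall>y \<ge> Y. \<forall>u. \<bar>u\<bar> \<le> M \<longrightarrow> (\<Sum>k=1..T. Fint f k y u) \<le> B)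
          \<and> (\<exists>c. \<forall>\<epsilon>>0. \<exists>Y. \<forall>y \<le> Y. \<forall>u. \<bar>u\<bar> \<le> M \<longrightarrow>
                 \<bar>(\<Sum>k=1..T. Fint f k y u) - c\<bar> < \<epsilon>)"
  then have "\<exists>Y. \<forall>y \<ge> Y. \<forall>u. \<bar>u\<bar> \<le> M \<longrightarrow> (\<Sum>k=1..T. Fint f k y u) \<le> 0" by blast
  then show ?thesis by (rule A6_case[OF A1 A5])
qed

lemma J_tendsto:
  assumes A1: "\<forall>k \<in> {1..T}. continuous_on (UNIV \<times> {-M..M}) (\<lambda>(y, u). f k y u)"
    and xs: "\<forall>k \<le> T + 1. (\<lambda>n. xs n k) \<longlonglongrightarrow> x k"
    and us: "\<forall>k\<in>{1..T}. (\<lambda>n. us n k) \<longlonglongrightarrow> u k"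
    and ub: "\<forall>n. \<forall>k\<in>{1..T}. \<bar>us n k\<bar> \<le> M"
  shows "(\<lambda>n. Jfun T p f g (us n) (xs n)) \<longlonglongrightarrow> Jfun T p f g u x"
  unfolding Jfun_def
proof (intro tendsto_add tendsto_diff tendsto_sum)
  fix k assume k: "k \<in> {1..T+1}"
  have "(\<lambda>n. xs n k) \<longlonglongrightarrow> x k" "(\<lambda>n. xs n (k - 1)) \<longlonglongrightarrow> x (k - 1)" using xs k by auto
  then show "(\<lambda>n. p k / 2 * (xs n k - xs n (k - 1))\<^sup>2) \<longlonglongrightarrow> p k / 2 * (x k - x (k - 1))\<^sup>2"
    by (intro tendsto_intros)
next
  fix k assume k: "k \<in> {1..T}"
  show "(\<lambda>n. Fint f k (xs n k) (us n k)) \<longlonglongrightarrow> Fint f k (x k) (u k)"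
    unfolding Fint_Ig
    by (rule Ig_tendsto[where f="f k"]) (use A1 xs us ub k in auto)
next
  fix k assume k: "k \<in> {1..T}"
  show "(\<lambda>n. g k * xs n k) \<longlonglongrightarrow> g k * x k"
    using xs k by (intro tendsto_intros) auto
qed

definition Kset :: "nat \<Rightarrow> real \<Rightarrow> (nat \<Rightarrow> real) set" where
  "Kset T R = {y. \<forall>k. y k \<in> (if k \<in> {1..T} then {-R..R} else {0})}"

lemma Kset_compact: "compact (Kset T R)"
proof -
  have eq: "Kset T R = PiE UNIV (\<lambda>k. if k \<in> {1..T} then {-R..R} else {0})"
    unfolding Kset_def by (auto simp: PiE_def Pi_def)
  have "compactin (product_topology (\<lambda>i. euclidean) UNIV) (PiE UNIV (\<lambda>k. if k \<in> {1..T} then {-R..R} else {0::real}))"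
    by (subst compactin_PiE) auto
  then show ?thesis unfolding eq euclidean_product_topology by simp
qed

lemma coord_tendsto:
  assumes "(xs :: nat \<Rightarrow> nat \<Rightarrow> real) \<longlonglongrightarrow> x"
  shows "(\<lambda>n. xs n k) \<longlonglongrightarrow> x k"
proof -
  have "isCont (\<lambda>y :: nat \<Rightarrow> real. y k) x"
    using continuous_on_product_coordinates[of k, where 'b=real] continuous_on_eq_continuous_at[of UNIV] by blast
  from isCont_tendsto_compose[OF this assms] show ?thesis .
qed


lemma LM_bound:
  assumes "u \<in> LM T M" "k \<in> {1..T}"
  shows "\<bar>u k\<bar> \<le> M"
proof -
  have "\<bar>u k\<bar> \<le> normC T u" unfolding normC_def using assms(2) by (intro Max_ge) auto
  then show ?thesis using assms(1) by (simp add: LM_def)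
qed

lemma normC_ge:
  assumes "k \<in> {1..T}"
  shows "\<bar>v k\<bar> \<le> normC T v"
  unfolding normC_def using assms by (intro Max_ge) auto

lemma J_cong:
  assumes "\<forall>j \<le> T + 1. x j = y j"
  shows "Jfun T p f g u x = Jfun T p f g u y"
  unfolding Jfun_def using assms by (intro arg_cong2[where f="(+)"] arg_cong2[where f="(-)"] sum.cong) auto

lemma J_zero: "Jfun T p f g u (\<lambda>k. 0) = 0"
  by (simp add: Jfun_def Fint_Ig)

theorem corollary1:
  fixes T :: nat and M :: real
    and p g :: "nat \<Rightarrow> real" and f :: "nat \<Rightarrow> real \<Rightarrow> real \<Rightarrow> real"
  assumes T: "T \<ge> 1" and M: "M > 0"
    and A1: "\<forall>k \<in> {1..T}. continuous_on (UNIV \<times> {-M..M}) (\<lambda>(y, u). f k y u)"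
    and A3: "Min (p ` {1..T+1}) > 0"
    and A5: "\<forall>k \<in> {1..T}. \<forall>y u. \<bar>u\<bar> \<le> M \<longrightarrow> f k y u - g k \<ge> 0"
    and A5': "\<exists>k1 \<in> {1..T}. \<forall>y u. \<bar>u\<bar> \<le> M \<longrightarrow> f k1 y u - g k1 > 0"
    and A2_or_A6:
      "(\<exists>\<alpha>>0. \<forall>k \<in> {1..T}. \<forall>y u. \<bar>y\<bar> \<ge> \<alpha> \<and> \<bar>u\<bar> \<le> M \<longrightarrow> y * f k y u \<le> 0)
       \<or> ((\<forall>B. \<exists>Y. \<forall>y \<ge> Y. \<forall>u. \<bar>u\<bar> \<le> M \<longrightarrow> (\<Sum>k=1..T. Fint f k y u) \<le> B)
          \<and> (\<exists>c. \<forall>\<epsilon>>0. \<exists>Y. \<forall>y \<le> Y. \<forall>u. \<bar>u\<bar> \<le> M \<longrightarrow>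
                 \<bar>(\<Sum>k=1..T. Fint f k y u) - c\<bar> < \<epsilon>))"
  shows "(\<forall>u \<in> LM T M. \<exists>x \<in> Vset T p f g u. solvesP T p f g u x
             \<and> (\<forall>k \<in> {1..T}. x k > 0)
             \<and> (\<forall>y \<in> Espace T. Jfun T p f g u x \<le> Jfun T p f g u y))
       \<and> (\<forall>us ubar xs.
            (\<forall>n. us n \<in> LM T M) \<and> ubar \<in> LM T M
            \<and> (\<lambda>n. normC T (\<lambda>k. us n k - ubar k)) \<longlonglongrightarrow> 0
            \<and> (\<forall>n. xs n \<in> Vset T p f g (us n) \<and> solvesP T p f g (us n) (xs n)
                   \<and> (\<forall>k \<in> {1..T}. xs n k > 0))
          \<longrightarrow> (\<exists>r xbar. strict_mono r \<and> xbar \<in> Espace T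
                 \<and> (\<lambda>i. normE T (\<lambda>k. xs (r i) k - xbar k)) \<longlonglongrightarrow> 0
                 \<and> (\<forall>y \<in> Espace T. Jfun T p f g ubar xbar \<le> Jfun T p f g ubar y)
                 \<and> (\<forall>k \<in> {1..T}. xbar k > 0)
                 \<and> solvesP T p f g ubar xbar))"
proof -
  define m where "m = Min (p ` {1..T+1})"
  have pm: "\<forall>k\<in>{1..T+1}. m \<le> p k" unfolding m_def by (auto intro: Min_le)
  have pp: "\<forall>k\<in>{1..T+1}. p k > 0" using pm A3 unfolding m_def by force
  have m0: "m > 0" using A3 m_def by simp
  obtain a b where ab: "a \<ge> 0" "b \<ge> 0"
    and Hb: "\<forall>k\<in>{1..T}. \<forall>y u. \<bar>u\<bar> \<le> M \<longrightarrow> Fint f k y u - g k * y \<le> a + b * \<bar>y\<bar>"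
    using coerc[OF A1 A5 A2_or_A6] by blast
  define R where "R = 1 + (T + 1) * (4 * (T * a + T * b\<^sup>2 / (4 * (m / (4 * real T * (real T + 1))))) / m)"
  have bnd: "\<forall>k\<in>{1..T}. \<bar>y k\<bar> \<le> R"
    if u: "\<forall>k\<in>{1..T}. \<bar>u k\<bar> \<le> M" and y: "y \<in> Espace T" and J: "Jfun T p f g u y \<le> 0" for u y
    unfolding R_def
  proof (rule J_bound[OF T m0 pm ab _ y J])
    show "\<forall>k\<in>{1..T}. Fint f k (y k) (u k) - g k * y k \<le> a + b * \<bar>y k\<bar>" using Hb u by blast
  qed
  have R0: "R \<ge> 0"
  proof -
    have "(\<lambda>k. 0::real) \<in> Espace T" by (simp add: Espace_def)
    from bnd[of "\<lambda>k. 0", OF _ this] T M show ?thesis by (auto simp: J_zero)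
  qed
  define K where "K = Kset T R"
  have Kc: "compact K" unfolding K_def by (rule Kset_compact)
  have K0: "(\<lambda>k. 0) \<in> K" unfolding K_def Kset_def using R0 by auto
  have KE: "x \<in> Espace T" if "x \<in> K" for x
  proof -
    have "x 0 \<in> (if 0 \<in> {1..T} then {-R..R} else {0})" "x (T+1) \<in> (if T+1 \<in> {1..T} then {-R..R} else {0})"
      using that unfolding K_def Kset_def by blast+
    then show ?thesis by (simp add: Espace_def)
  qed
  define tr where "tr y = (\<lambda>k. if k \<in> {1..T} then y k else 0)" for y :: "nat \<Rightarrow> real"
  have tr_eq: "\<forall>j \<le> T + 1. tr y j = y j" if "y \<in> Espace T" for y
    using that unfolding tr_def Espace_def by (auto simp: not_less_eq_eq le_Suc_eq)
  have trK: "tr y \<in> K" if "\<forall>k\<in>{1..T}. \<bar>y k\<bar> \<le> R" for y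
    unfolding tr_def K_def Kset_def
  proof (intro CollectI allI)
    fix k
    show "(if k \<in> {1..T} then y k else 0) \<in> (if k \<in> {1..T} then {-R..R} else {0})"
    proof (cases "k \<in> {1..T}")
      case True
      then have "\<bar>y k\<bar> \<le> R" using that by blast
      then have "-R \<le> y k" "y k \<le> R" by linarith+
      then show ?thesis using True by simp
    next
      case False
      then show ?thesis by auto
    qed
  qed
  have hfc: "\<forall>k\<in>{1..T}. continuous_on UNIV (\<lambda>t. f k t (u k))" if "\<forall>k\<in>{1..T}. \<bar>u k\<bar> \<le> M" for u
    using that A1 by (auto intro: cont_slice[where f="f k" for k])
  have ge: "\<forall>k\<in>{1..T}. f k (x k) (u k) \<ge> g k" if "\<forall>k\<in>{1..T}. \<bar>u k\<bar> \<le> M" for u x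
    using that A5 by auto
  obtain k1 where k1: "k1 \<in> {1..T}" "\<forall>y u. \<bar>u\<bar> \<le> M \<longrightarrow> f k1 y u - g k1 > 0" using A5' by blast
  have gt: "f k1 (x k1) (u k1) > g k1" if "\<forall>k\<in>{1..T}. \<bar>u k\<bar> \<le> M" for u x
    using that k1 by auto
  have minJ: "(\<forall>v\<in>Espace T. Jfun T p f g u x \<le> Jfun T p f g u v) \<Longrightarrow> x \<in> Espace T \<Longrightarrow>
      x \<in> Vset T p f g u \<and> solvesP T p f g u x \<and> (\<forall>k\<in>{1..T}. x k > 0)"
    if u: "\<forall>k\<in>{1..T}. \<bar>u k\<bar> \<le> M" for u x
  proof -
    assume mn: "\<forall>v\<in>Espace T. Jfun T p f g u x \<le> Jfun T p f g u v" and x: "x \<in> Espace T"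
    have s: "solvesP T p f g u x" by (rule min_solves[OF hfc[OF u] x mn])
    show ?thesis using min_Vset[OF hfc[OF u] x mn] s pos_sol[OF s pp ge[OF u, of x] k1(1) gt[OF u, of x]] by blast
  qed
  show ?thesis
  proof (intro conjI ballI allI impI)
    fix u assume uL: "u \<in> LM T M"
    have u: "\<forall>k\<in>{1..T}. \<bar>u k\<bar> \<le> M" using LM_bound[OF uL] by blast
    have cJ: "continuous_on K (Jfun T p f g u)"
    proof (rule continuous_on_sequentiallyI)
      fix ys :: "nat \<Rightarrow> nat \<Rightarrow> real" and y
      assume "ys \<longlonglongrightarrow> y"
      then have "\<forall>k \<le> T + 1. (\<lambda>n. ys n k) \<longlonglongrightarrow> y k" using coord_tendsto by blast
      then show "(\<lambda>n. Jfun T p f g u (ys n)) \<longlonglongrightarrow> Jfun T p f g u y"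
        using J_tendsto[OF A1, of ys y "\<lambda>n. u" u] u by auto
    qed
    obtain x where xK: "x \<in> K" and xm: "\<forall>y\<in>K. Jfun T p f g u x \<le> Jfun T p f g u y"
      using continuous_attains_inf[OF Kc _ cJ] K0 by blast
    have xE: "x \<in> Espace T" by (rule KE[OF xK])
    have mn: "\<forall>v\<in>Espace T. Jfun T p f g u x \<le> Jfun T p f g u v"
    proof
      fix v assume v: "v \<in> Espace T"
      show "Jfun T p f g u x \<le> Jfun T p f g u v"
      proof (cases "\<forall>k\<in>{1..T}. \<bar>v k\<bar> \<le> R")
        case True
        then have "Jfun T p f g u x \<le> Jfun T p f g u (tr v)" using xm trK by blast
        also have "\<dots> = Jfun T p f g u v" by (rule J_cong[OF tr_eq[OF v]])
        finally show ?thesis .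
      next
        case False
        then have "Jfun T p f g u v > 0" using bnd[OF u v] by force
        moreover have "Jfun T p f g u x \<le> 0" using xm K0 J_zero by metis
        ultimately show ?thesis by simp
      qed
    qed
    show "\<exists>x \<in> Vset T p f g u. solvesP T p f g u x
             \<and> (\<forall>k \<in> {1..T}. x k > 0)
             \<and> (\<forall>y \<in> Espace T. Jfun T p f g u x \<le> Jfun T p f g u y)"
      using minJ[OF u mn xE] mn by blast
  next
    fix us ubar xs
    assume H: "(\<forall>n. us n \<in> LM T M) \<and> ubar \<in> LM T M
            \<and> (\<lambda>n. normC T (\<lambda>k. us n k - ubar k)) \<longlonglongrightarrow> 0
            \<and> (\<forall>n. xs n \<in> Vset T p f g (us n) \<and> solvesP T p f g (us n) (xs n)
                   \<and> (\<forall>k \<in> {1..T}. xs n k > 0))"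
    have usb: "\<forall>n. \<forall>k\<in>{1..T}. \<bar>us n k\<bar> \<le> M" using H LM_bound by blast
    have ubb: "\<forall>k\<in>{1..T}. \<bar>ubar k\<bar> \<le> M" using H LM_bound by blast
    have usc: "\<forall>k\<in>{1..T}. (\<lambda>n. us n k) \<longlonglongrightarrow> ubar k"
    proof
      fix k assume k: "k \<in> {1..T}"
      have "(\<lambda>n. us n k - ubar k) \<longlonglongrightarrow> 0"
      proof (rule Lim_null_comparison)
        show "eventually (\<lambda>n. norm (us n k - ubar k) \<le> normC T (\<lambda>k. us n k - ubar k)) sequentially"
          using normC_ge[OF k] by (intro always_eventually) auto
      qed (use H in blast)
      then show "(\<lambda>n. us n k) \<longlonglongrightarrow> ubar k" by (rule LIM_zero_cancel)
    qed
    have xsE: "xs n \<in> Espace T" and xsm: "\<forall>v\<in>Espace T. Jfun T p f g (us n) (xs n) \<le> Jfun T p f g (us n) v" for n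
      using H unfolding Vset_def by blast+
    have xsK: "tr (xs n) \<in> K" for n
    proof (rule trK, rule bnd[of "us n"])
      show "\<forall>k\<in>{1..T}. \<bar>us n k\<bar> \<le> M" using usb by blast
      show "xs n \<in> Espace T" by (rule xsE)
      have "(\<lambda>k. 0::real) \<in> Espace T" by (simp add: Espace_def)
      then show "Jfun T p f g (us n) (xs n) \<le> 0" using xsm[of n] J_zero by metis
    qed
    have "seq_compact K" by (rule compact_imp_seq_compact[OF Kc])
    then obtain xbar r where xbK: "xbar \<in> K" and r: "strict_mono r" and lim: "((\<lambda>n. tr (xs n)) \<circ> r) \<longlonglongrightarrow> xbar"
      unfolding seq_compact_def using xsK by metis
    have xsr: "\<forall>k \<le> T + 1. (\<lambda>i. xs (r i) k) \<longlonglongrightarrow> xbar k"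
    proof (intro allI impI)
      fix k assume k: "k \<le> T + 1"
      have "(\<lambda>i. tr (xs (r i)) k) \<longlonglongrightarrow> xbar k" using coord_tendsto[OF lim, of k] by (simp add: o_def)
      then show "(\<lambda>i. xs (r i) k) \<longlonglongrightarrow> xbar k" using tr_eq[OF xsE] k by simp
    qed
    have xbE: "xbar \<in> Espace T" by (rule KE[OF xbK])
    have usr: "\<forall>k\<in>{1..T}. (\<lambda>i. us (r i) k) \<longlonglongrightarrow> ubar k"
      using usc LIMSEQ_subseq_LIMSEQ[OF _ r] by (auto simp: o_def)
    have mnb: "\<forall>v\<in>Espace T. Jfun T p f g ubar xbar \<le> Jfun T p f g ubar v"
    proof
      fix v assume v: "v \<in> Espace T"
      have l1: "(\<lambda>i. Jfun T p f g (us (r i)) (xs (r i))) \<longlonglongrightarrow> Jfun T p f g ubar xbar"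
        by (rule J_tendsto[OF A1 xsr usr]) (use usb in blast)
      have l2: "(\<lambda>i. Jfun T p f g (us (r i)) v) \<longlonglongrightarrow> Jfun T p f g ubar v"
        by (rule J_tendsto[OF A1 _ usr]) (use usb in auto)
      show "Jfun T p f g ubar xbar \<le> Jfun T p f g ubar v"
        by (rule LIMSEQ_le[OF l1 l2]) (use xsm v in blast)
    qed
    have nE: "(\<lambda>i. normE T (\<lambda>k. xs (r i) k - xbar k)) \<longlonglongrightarrow> 0"
    proof -
      have "(\<lambda>i. \<Sum>k=1..T. ((xs (r i) (k + 1) - xbar (k + 1)) - (xs (r i) k - xbar k))\<^sup>2)
          \<longlonglongrightarrow> (\<Sum>k=1..T. ((xbar (k + 1) - xbar (k + 1)) - (xbar k - xbar k))\<^sup>2)"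
        using xsr by (intro tendsto_intros) auto
      then have "(\<lambda>i. \<Sum>k=1..T. ((xs (r i) (k + 1) - xbar (k + 1)) - (xs (r i) k - xbar k))\<^sup>2) \<longlonglongrightarrow> 0"
        by simp
      from tendsto_real_sqrt[OF this] show ?thesis unfolding normE_def by simp
    qed
    have fin: "xbar \<in> Vset T p f g ubar \<and> solvesP T p f g ubar xbar \<and> (\<forall>k\<in>{1..T}. xbar k > 0)"
      by (rule minJ[OF ubb mnb xbE])
    show "\<exists>r xbar. strict_mono r \<and> xbar \<in> Espace T
                 \<and> (\<lambda>i. normE T (\<lambda>k. xs (r i) k - xbar k)) \<longlonglongrightarrow> 0
                 \<and> (\<forall>y \<in> Espace T. Jfun T p f g ubar xbar \<le> Jfun T p f g ubar y)
                 \<and> (\<forall>k \<in> {1..T}. xbar k > 0)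
                 \<and> solvesP T p f g ubar xbar"
      using r xbE nE mnb fin by blast
  qed
qed

end
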